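(* Let $A_1,\dots,A_n:\mathbb{R}^d\rightrightarrows\mathbb{R}^d$ be maximal monotone and $B:\mathbb{R}^d\to\mathbb{R}^d$ monotone and Lipschitz continuous. Let $(z^k)\subset\mathbb{R}^d$, $(w_1^k,\dots,w_{n+1}^k)\subset\mathbb{R}^{(n+1)d}$ and $(x_i^k,y_i^k)_{i=1}^{n+1}\subset\mathbb{R}^{2(n+1)d}$ be deterministic sequences such that $y_i^k\in A_i(x_i^k)$ for $i=1,\dots,n$, $\sum_{i=1}^{n+1}w_i^k=0$ for all $k$, $$\xi_1\sum_{i=1}^n\|y_i^k-w_i^k\|^2+\xi_2\sum_{i=1}^n\|z^k-x_i^k\|^2+\xi_3\|B(z^k)-w_{n+1}^k\|^2\to0$$ for some scalars $\xi_1,\xi_2,\xi_3>0$, and $p^k:=(z^k,w_1^k,\dots,w_{n+1}^k)\to\hat p:=(\hat z,\hat w_1,\dots,\hat w_{n+1})$. Then $\hat p\in\mathcal{S}$.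
   Context: $\mathcal{S}=\{(z,w_1,\dots,w_{n+1})\in\mathbb{R}^{(n+2)d}: w_i\in A_i(z)\ \forall i=1,\dots,n,\ w_{n+1}=B(z),\ \sum_{i=1}^{n+1}w_i=0\}$. *)

theory Defs
  imports "HOL-Analysis.Analysis"
begin

definition monotone_op :: "('a::real_inner \<Rightarrow> 'a set) \<Rightarrow> bool" where
  "monotone_op A \<longleftrightarrow>
     (\<forall>x u y v. u \<in> A x \<longrightarrow> v \<in> A y \<longrightarrow> inner (u - v) (x - y) \<ge> 0)"

definition maximal_monotone :: "('a::real_inner \<Rightarrow> 'a set) \<Rightarrow> bool" where
  "maximal_monotone A \<longleftrightarrow> monotone_op A \<and>
     (\<forall>A'. monotone_op A' \<and> (\<forall>x. A x \<subseteq> A' x) \<longrightarrow> A' = A)"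

definition monotone_fun :: "('a::real_inner \<Rightarrow> 'a) \<Rightarrow> bool" where
  "monotone_fun B \<longleftrightarrow> (\<forall>x y. inner (B x - B y) (x - y) \<ge> 0)"

definition solution_set ::
  "nat \<Rightarrow> (nat \<Rightarrow> 'a::real_inner \<Rightarrow> 'a set) \<Rightarrow> ('a \<Rightarrow> 'a) \<Rightarrow> ('a \<times> (nat \<Rightarrow> 'a)) set" where
  "solution_set n A B = {(z, w). (\<forall>i\<in>{1..n}. w i \<in> A i z) \<and> w (n+1) = B z \<and>
                                   (\<Sum>i=1..n+1. w i) = 0}"

end

theory Submission
  imports Defs
begin

lemma mm_closed:
  fixes A :: "'a::real_inner \<Rightarrow> 'a set"
  assumes mm: "maximal_monotone A"
    and xc: "xs \<longlonglongrightarrow> x" and yc: "ys \<longlonglongrightarrow> y"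
    and inA: "\<forall>k. ys k \<in> A (xs k)"
  shows "y \<in> A x"
proof -
  have mo: "monotone_op A" using mm unfolding maximal_monotone_def by blast
  have key: "inner (y - v) (x - b) \<ge> 0" if "v \<in> A b" for v b
  proof -
    have "(\<lambda>k. inner (ys k - v) (xs k - b)) \<longlonglongrightarrow> inner (y - v) (x - b)"
      using xc yc by (intro tendsto_intros)
    moreover have "\<forall>k. inner (ys k - v) (xs k - b) \<ge> 0"
      using mo inA that unfolding monotone_op_def by blast
    ultimately show ?thesis by (intro LIMSEQ_le_const) auto
  qed
  define A' where "A' = A(x := insert y (A x))"
  have "monotone_op A'"
    unfolding monotone_op_def
  proof (intro allI impI)
    fix a u b v assume u: "u \<in> A' a" and v: "v \<in> A' b"
    show "inner (u - v) (a - b) \<ge> 0"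
    proof (cases "a = x \<and> u = y")
      case True
      then show ?thesis
      proof (cases "b = x \<and> v = y")
        case True with \<open>a = x \<and> u = y\<close> show ?thesis by simp
      next
        case False
        then have "v \<in> A b" using v unfolding A'_def by (auto split: if_splits)
        then show ?thesis using key True by auto
      qed
    next
      case False
      then have ua: "u \<in> A a" using u unfolding A'_def by (auto split: if_splits)
      show ?thesis
      proof (cases "b = x \<and> v = y")
        case True
        have "inner (y - u) (x - a) \<ge> 0" using key ua by auto
        moreover have "inner (u - v) (a - b) = inner (y - u) (x - a)"
          using True by (simp add: inner_diff_left inner_diff_right inner_commute)
        ultimately show ?thesis by simp
      next
        case False
        then have "v \<in> A b" using v unfolding A'_def by (auto split: if_splits)
        then show ?thesis using mo ua unfolding monotone_op_def by blast
      qed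
    qed
  qed
  moreover have "\<forall>z. A z \<subseteq> A' z" unfolding A'_def by auto
  ultimately have "A' = A" using mm unfolding maximal_monotone_def by blast
  then show ?thesis unfolding A'_def by (metis fun_upd_same insertI1)
qed

lemma sq_to0:
  fixes f :: "nat \<Rightarrow> 'a::real_normed_vector"
  assumes "(\<lambda>k. (norm (f k))\<^sup>2) \<longlonglongrightarrow> 0"
  shows "f \<longlonglongrightarrow> 0"
proof -
  have "(\<lambda>k. sqrt ((norm (f k))\<^sup>2)) \<longlonglongrightarrow> sqrt 0"
    using assms by (intro tendsto_intros) auto
  then have "(\<lambda>k. norm (f k)) \<longlonglongrightarrow> 0" by simp
  then show ?thesis by (simp add: tendsto_norm_zero_iff)
qed

lemma squeeze_term:
  fixes g :: "nat \<Rightarrow> real"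
  assumes "S \<longlonglongrightarrow> 0" "\<forall>k. 0 \<le> c * g k" "\<forall>k. c * g k \<le> S k" "c > 0"
  shows "g \<longlonglongrightarrow> 0"
proof -
  have "(\<lambda>k. S k / c) \<longlonglongrightarrow> 0 / c" using assms by (intro tendsto_intros) auto
  moreover have "\<forall>k. 0 \<le> g k" using assms by (simp add: zero_le_mult_iff)
  moreover have "\<forall>k. g k \<le> S k / c" using assms by (simp add: pos_le_divide_eq mult.commute[of c])
  ultimately show ?thesis by (intro tendsto_sandwich[of "\<lambda>_. 0" g sequentially "\<lambda>k. S k / c"]) auto
qed

theorem lemma4:
  fixes n :: nat
    and A :: "nat \<Rightarrow> real ^ 'd \<Rightarrow> (real ^ 'd) set"
    and B :: "real ^ 'd \<Rightarrow> real ^ 'd"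
    and z :: "nat \<Rightarrow> real ^ 'd"
    and w x y :: "nat \<Rightarrow> nat \<Rightarrow> real ^ 'd"
    and \<xi>1 \<xi>2 \<xi>3 :: real
    and zhat :: "real ^ 'd" and what :: "nat \<Rightarrow> real ^ 'd"
  assumes maxmono: "\<forall>i\<in>{1..n}. maximal_monotone (A i)"
    and Bmono: "monotone_fun B"
    and Blip: "\<exists>L. L-lipschitz_on UNIV B"
    and incl: "\<forall>k. \<forall>i\<in>{1..n}. y k i \<in> A i (x k i)"
    and sum0: "\<forall>k. (\<Sum>i=1..n+1. w k i) = 0"
    and xi_pos: "\<xi>1 > 0" "\<xi>2 > 0" "\<xi>3 > 0"
    and resid: "(\<lambda>k. \<xi>1 * (\<Sum>i=1..n. (norm (y k i - w k i))\<^sup>2)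
                   + \<xi>2 * (\<Sum>i=1..n. (norm (z k - x k i))\<^sup>2)
                   + \<xi>3 * (norm (B (z k) - w k (n+1)))\<^sup>2) \<longlonglongrightarrow> 0"
    and zconv: "z \<longlonglongrightarrow> zhat"
    and wconv: "\<forall>i\<in>{1..n+1}. (\<lambda>k. w k i) \<longlonglongrightarrow> what i"
  shows "(zhat, what) \<in> solution_set n A B"
proof -
  define S where "S = (\<lambda>k. \<xi>1 * (\<Sum>i=1..n. (norm (y k i - w k i))\<^sup>2)
                   + \<xi>2 * (\<Sum>i=1..n. (norm (z k - x k i))\<^sup>2)
                   + \<xi>3 * (norm (B (z k) - w k (n+1)))\<^sup>2)"
  have S0: "S \<longlonglongrightarrow> 0" using resid unfolding S_def .
  have n1: "0 \<le> \<xi>1 * (\<Sum>i=1..n. (norm (y k i - w k i))\<^sup>2)" for k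
    using xi_pos by (intro mult_nonneg_nonneg sum_nonneg) auto
  have n2: "0 \<le> \<xi>2 * (\<Sum>i=1..n. (norm (z k - x k i))\<^sup>2)" for k
    using xi_pos by (intro mult_nonneg_nonneg sum_nonneg) auto
  have n3: "0 \<le> \<xi>3 * (norm (B (z k) - w k (n+1)))\<^sup>2" for k
    using xi_pos by (intro mult_nonneg_nonneg) auto
  have Bc: "(\<lambda>k. B (z k) - w k (n+1)) \<longlonglongrightarrow> 0"
    apply (rule sq_to0)
    apply (rule squeeze_term[OF S0 _ _ xi_pos(3)])
    using n1 n2 n3 xi_pos unfolding S_def by (auto intro!: add_nonneg_nonneg)
  have yw: "(\<lambda>k. y k i - w k i) \<longlonglongrightarrow> 0" if i: "i \<in> {1..n}" for i
  proof -
    have "\<xi>1 * (norm (y k i - w k i))\<^sup>2 \<le> \<xi>1 * (\<Sum>i=1..n. (norm (y k i - w k i))\<^sup>2)" for k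
      using xi_pos i by (intro mult_left_mono member_le_sum) auto
    moreover have "\<xi>1 * (\<Sum>i=1..n. (norm (y k i - w k i))\<^sup>2) \<le> S k" for k
      using n2[of k] n3[of k] unfolding S_def by linarith
    ultimately have "\<forall>k. \<xi>1 * (norm (y k i - w k i))\<^sup>2 \<le> S k" using order_trans by blast
    moreover have "\<forall>k. 0 \<le> \<xi>1 * (norm (y k i - w k i))\<^sup>2" using xi_pos by simp
    ultimately have "(\<lambda>k. (norm (y k i - w k i))\<^sup>2) \<longlonglongrightarrow> 0"
      using squeeze_term[OF S0 _ _ xi_pos(1), of "\<lambda>k. (norm (y k i - w k i))\<^sup>2"] by blast
    then show ?thesis by (rule sq_to0)
  qed
  have zx: "(\<lambda>k. z k - x k i) \<longlonglongrightarrow> 0" if i: "i \<in> {1..n}" for i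
  proof -
    have "\<xi>2 * (norm (z k - x k i))\<^sup>2 \<le> \<xi>2 * (\<Sum>i=1..n. (norm (z k - x k i))\<^sup>2)" for k
      using xi_pos i by (intro mult_left_mono member_le_sum) auto
    moreover have "\<xi>2 * (\<Sum>i=1..n. (norm (z k - x k i))\<^sup>2) \<le> S k" for k
      using n1[of k] n3[of k] unfolding S_def by linarith
    ultimately have "\<forall>k. \<xi>2 * (norm (z k - x k i))\<^sup>2 \<le> S k" using order_trans by blast
    moreover have "\<forall>k. 0 \<le> \<xi>2 * (norm (z k - x k i))\<^sup>2" using xi_pos by simp
    ultimately have "(\<lambda>k. (norm (z k - x k i))\<^sup>2) \<longlonglongrightarrow> 0"
      using squeeze_term[OF S0 _ _ xi_pos(2), of "\<lambda>k. (norm (z k - x k i))\<^sup>2"] by blast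
    then show ?thesis by (rule sq_to0)
  qed
  obtain L where L: "L-lipschitz_on UNIV B" using Blip by blast
  have Bcont: "continuous_on UNIV B" using lipschitz_on_continuous_on[OF L] .
  have Bz: "(\<lambda>k. B (z k)) \<longlonglongrightarrow> B zhat"
    using continuous_on_tendsto_compose[OF Bcont zconv] by (simp add: o_def)
  have wl: "(\<lambda>k. w k (n+1)) \<longlonglongrightarrow> what (n+1)"
    using wconv by simp
  have "(\<lambda>k. B (z k) - (B (z k) - w k (n+1))) \<longlonglongrightarrow> B zhat - 0"
    by (rule tendsto_diff[OF Bz Bc])
  then have wl2: "(\<lambda>k. w k (n+1)) \<longlonglongrightarrow> B zhat" by simp
  have last: "what (n+1) = B zhat"
    by (rule LIMSEQ_unique[OF wl wl2])
  have incA: "what i \<in> A i zhat" if i: "i \<in> {1..n}" for i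
  proof (rule mm_closed[of "A i" "\<lambda>k. x k i" _ "\<lambda>k. y k i"])
    show "maximal_monotone (A i)" using maxmono i by blast
    have "(\<lambda>k. z k - (z k - x k i)) \<longlonglongrightarrow> zhat - 0" using zconv zx[OF i] by (intro tendsto_intros)
    then show "(\<lambda>k. x k i) \<longlonglongrightarrow> zhat" by simp
    have "(\<lambda>k. w k i + (y k i - w k i)) \<longlonglongrightarrow> what i + 0" using wconv yw[OF i] i by (intro tendsto_intros) auto
    then show "(\<lambda>k. y k i) \<longlonglongrightarrow> what i" by simp
    show "\<forall>k. y k i \<in> A i (x k i)" using incl i by blast
  qed
  have "(\<lambda>k. \<Sum>i=1..n+1. w k i) \<longlonglongrightarrow> (\<Sum>i=1..n+1. what i)"
    using wconv by (intro tendsto_sum) auto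
  moreover have "(\<lambda>k. \<Sum>i=1..n+1. w k i) = (\<lambda>k. 0)" using sum0 by simp
  ultimately have "(\<lambda>k. 0::real^'d) \<longlonglongrightarrow> (\<Sum>i=1..n+1. what i)" by simp
  then have "(\<Sum>i=1..n+1. what i) = 0" using LIMSEQ_unique[OF _ tendsto_const] by blast
  then show ?thesis using last incA unfolding solution_set_def by auto
qed

end
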